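(* Let $l\in\{1,\dots,r\}$ and let $i=i(l)$ be the unique positive integer with $0\le \sum_{j=i}^nM_j-lp<M_i$. Then the $\mathrm{id}$-leading term of $I^{[l]}(z)$ equals $$(-1)^{\sum_{j=1}^iM_j}\,\frac{\Gamma_{\mathbb{F}_p}(M_i+1)\,\Gamma_{\mathbb{F}_p}\big(\sum_{j=i+1}^nM_j-(l-1)p+1\big)}{\Gamma_{\mathbb{F}_p}\big(\sum_{j=i}^nM_j-lp+1\big)}\Big(\frac{\sum_{j=i+1}^ne_j}{\sum_{j=i+1}^nM_j}-\frac{e_i}{M_i}\Big)\,z_1^{M_1}\cdots z_{i-1}^{M_{i-1}}z_i^{\sum_{j=i}^nM_j-lp}.$$
   Context: Let $p,q$ be primes and $n$ a positive integer with $p>n\ge2$, $p>q$. Fix positive integers $m_1,\dots,m_n<q$; $M_i$ is the least positive integer with $M_i\equiv -m_iq^{-1}\pmod p$ (so $1\le M_i\le p-1$), and in formulas over $\mathbb{F}_p$ denotes its residue. $e_1,\dots,e_n$ is the standard basis of $\mathbb{F}_p^n$. With $\Phi_p(x,z)=\prod_{i=1}^n(x-z_i)^{M_i}$, for a positive integer $l$, $I^{[l]}(z)\in\mathbb{F}_p[z_1,\dots,z_n]^n$ is the coefficient of $x^{lp-1}$ in $\big(\Phi_p/(x-z_1),\dots,\Phi_p/(x-z_n)\big)$. $r=\lfloor (M_1+\dots+M_n)/p\rfloor$. Monomials $z_1^{d_1}\cdots z_n^{d_n}$ are ordered lexicographically by exponent vectors $(d_1,\dots,d_n)$ (so $z_1>z_2>\dots>z_n$);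 the $\mathrm{id}$-leading term of a nonzero $f\in\mathbb{F}_p[z]^n$ is $a\,z^d$ where $z^d$ is the largest monomial occurring in $f$ with nonzero coefficient $a\in\mathbb{F}_p^n$. For an integer $1\le x\le p$, $\Gamma_{\mathbb{F}_p}(x)$ is the residue of $(-1)^{x-1}(x-1)!$. *)

theory Defs
  imports "HOL-Library.Poly_Mapping" "Berlekamp_Zassenhaus.Finite_Field"
begin

text \<open>Multivariate polynomials over a ring 'a in variables indexed by nat:
  variable 0 is x, variable i (1 \<le> i \<le> n) is z_i.\<close>

type_synonym 'a mpoly = "(nat \<Rightarrow>\<^sub>0 nat) \<Rightarrow>\<^sub>0 'a"

definition Var :: "nat \<Rightarrow> 'a::comm_ring_1 mpoly" where
  "Var j = Poly_Mapping.single (Poly_Mapping.single j 1) 1"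

definition Mres :: "'p::prime_card itself \<Rightarrow> nat \<Rightarrow> nat \<Rightarrow> nat" where
  "Mres TYPE('p) q mi = (LEAST M::nat. 0 < M \<and>
      (of_nat M :: 'p mod_ring) = - of_nat mi / of_nat q)"

text \<open>Phi_p(x,z) / (x - z_k) = (x - z_k)^(M_k - 1) * prod_{i \<noteq> k} (x - z_i)^(M_i).\<close>
definition Phi_div :: "nat \<Rightarrow> (nat \<Rightarrow> nat) \<Rightarrow> nat \<Rightarrow> 'a::comm_ring_1 mpoly" where
  "Phi_div n M k = (Var 0 - Var k) ^ (M k - 1) *
      (\<Prod>i\<in>{1..n} - {k}. (Var 0 - Var i) ^ (M i))"

text \<open>I^[l]: component k (1 \<le> k \<le> n) evaluated at the z-monomial d (an exponent
  vector supported in {1..n}) gives the coefficient of x^(lp-1) z^d in Phi_p/(x - z_k).\<close>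
definition Ivec :: "nat \<Rightarrow> (nat \<Rightarrow> nat) \<Rightarrow> nat \<Rightarrow> nat \<Rightarrow> nat \<Rightarrow> (nat \<Rightarrow>\<^sub>0 nat) \<Rightarrow> 'a::comm_ring_1" where
  "Ivec n M p l k d = Poly_Mapping.lookup (Phi_div n M k) (Poly_Mapping.single 0 (l * p - 1) + d)"

definition zmonom :: "nat \<Rightarrow> (nat \<Rightarrow>\<^sub>0 nat) \<Rightarrow> bool" where
  "zmonom n d \<longleftrightarrow> Poly_Mapping.keys d \<subseteq> {1..n}"

definition lex_less :: "nat \<Rightarrow> (nat \<Rightarrow>\<^sub>0 nat) \<Rightarrow> (nat \<Rightarrow>\<^sub>0 nat) \<Rightarrow> bool" where
  "lex_less n d d' \<longleftrightarrow> (\<exists>j\<in>{1..n}. (\<forall>i\<in>{1..<j}. Poly_Mapping.lookup d i = Poly_Mapping.lookup d' i) \<and> Poly_Mapping.lookup d j < Poly_Mapping.lookup d' j)"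

text \<open>The id-leading term of the vector polynomial F (components k \<in> {1..n},
  F k d = coefficient of z^d in component k) is a z^D, a \<in> F^n.\<close>
definition id_leading_term :: "nat \<Rightarrow> (nat \<Rightarrow> (nat \<Rightarrow>\<^sub>0 nat) \<Rightarrow> 'a::zero) \<Rightarrow> (nat \<Rightarrow> 'a) \<Rightarrow> (nat \<Rightarrow>\<^sub>0 nat) \<Rightarrow> bool" where
  "id_leading_term n F a D \<longleftrightarrow>
     zmonom n D \<and> (\<exists>k\<in>{1..n}. a k \<noteq> 0) \<and> (\<forall>k\<in>{1..n}. F k D = a k) \<and>
     (\<forall>d. zmonom n d \<and> lex_less n D d \<longrightarrow> (\<forall>k\<in>{1..n}. F k d = 0))"

definition GammaF :: "nat \<Rightarrow> 'a::comm_ring_1" where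
  "GammaF x = (-1) ^ (x - 1) * of_nat (fact (x - 1))"

end

theory Submission
  imports Defs "HOL-Number_Theory.Residues"
begin

lemma single_mon_pow: "(Poly_Mapping.single (Poly_Mapping.single j (1::nat)) (1::'a::comm_ring_1)) ^ k
   = Poly_Mapping.single (Poly_Mapping.single j k) 1"
proof (induction k)
  case 0 then show ?case by simp
next
  case (Suc k)
  then show ?case by (simp add: mult_single Poly_Mapping.single_add[symmetric])
qed

lemma Var_pow: "(Var j :: 'a::comm_ring_1 mpoly) ^ k = Poly_Mapping.single (Poly_Mapping.single j k) 1"
  unfolding Var_def by (rule single_mon_pow)

lemma const_single: "(of_nat c :: 'a::comm_ring_1 mpoly) = Poly_Mapping.single 0 (of_nat c)"
  by (rule single_of_nat[symmetric])

lemma neg1_pow_single: "((-1) ^ k :: 'a::comm_ring_1 mpoly) = Poly_Mapping.single 0 ((-1)^k)"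
proof (induction k)
  case 0 then show ?case by simp
next
  case (Suc k)
  have "(-1 :: 'a mpoly) = Poly_Mapping.single 0 (-1)"
    by (simp add: single_uminus)
  have "((-1) ^ Suc k :: 'a mpoly) = (-1) * (-1)^k" by simp
  also have "\<dots> = Poly_Mapping.single 0 (-1) * Poly_Mapping.single 0 ((-1)^k)"
    by (simp only: Suc[symmetric] \<open>(-1 :: 'a mpoly) = Poly_Mapping.single 0 (-1)\<close>)
  also have "\<dots> = Poly_Mapping.single 0 ((-1) ^ Suc k)" by (simp only: mult_single) simp
  finally show ?case .
qed

lemma binom_expand:
  "((Var 0 - Var j) ^ e :: 'a::comm_ring_1 mpoly) =
   (\<Sum>a\<le>e. Poly_Mapping.single (Poly_Mapping.single 0 (e - a) + Poly_Mapping.single j a)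
        ((-1)^a * of_nat (e choose a)))"
proof -
  have "((Var 0 - Var j) ^ e :: 'a mpoly) = (- Var j + Var 0) ^ e" by (simp only: diff_conv_add_uminus add.commute)
  also have "\<dots> = (\<Sum>a\<le>e. of_nat (e choose a) * (- Var j) ^ a * Var 0 ^ (e - a))"
    by (rule binomial_ring)
  also have "\<dots> = (\<Sum>a\<le>e. Poly_Mapping.single (Poly_Mapping.single 0 (e - a) + Poly_Mapping.single j a)
        ((-1)^a * of_nat (e choose a)))"
  proof (rule sum.cong[OF refl])
    fix a
    have e1: "(- Var j :: 'a mpoly) ^ a = (-1)^a * Var j ^ a"
      by (rule power_minus)
    have "of_nat (e choose a) * (- Var j :: 'a mpoly) ^ a * Var 0 ^ (e - a) =
       Poly_Mapping.single 0 (of_nat (e choose a)) * (Poly_Mapping.single 0 ((-1)^a) * Poly_Mapping.single (Poly_Mapping.single j a) 1)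
        * Poly_Mapping.single (Poly_Mapping.single 0 (e - a)) 1"
      by (simp only: e1 Var_pow const_single neg1_pow_single)
    also have "\<dots> = Poly_Mapping.single (0 + (0 + Poly_Mapping.single j a) + Poly_Mapping.single 0 (e - a))
         (of_nat (e choose a) * ((-1)^a * 1) * 1)"
      by (simp only: mult_single)
    also have "\<dots> = Poly_Mapping.single (Poly_Mapping.single 0 (e - a) + Poly_Mapping.single j a)
        ((-1)^a * of_nat (e choose a))"
      by (simp add: add.commute mult.commute)
    finally show "of_nat (e choose a) * (- Var j :: 'a mpoly) ^ a * Var 0 ^ (e - a) =
       Poly_Mapping.single (Poly_Mapping.single 0 (e - a) + Poly_Mapping.single j a)
        ((-1)^a * of_nat (e choose a))" .
  qed
  finally show ?thesis .
qed

lemma prod_single: "finite J \<Longrightarrow> (\<Prod>j\<in>J. Poly_Mapping.single (mu j) (c j :: 'a::comm_ring_1))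
   = Poly_Mapping.single (\<Sum>j\<in>J. mu j) (\<Prod>j\<in>J. c j)"
  by (induction J rule: finite_induct) (auto simp: mult_single)

lemma lookup_sum_mon:
  assumes "finite J" "0 \<notin> J"
  shows "Poly_Mapping.lookup (\<Sum>j\<in>J. Poly_Mapping.single 0 (a j) + Poly_Mapping.single j (b j)) x
     = (if x = 0 then (\<Sum>j\<in>J. a j) else if x \<in> J then b x else (0::nat))"
  using assms
  by (auto simp: lookup_sum lookup_add lookup_single when_def sum.distrib sum.delta)

lemma coef_prod:
  fixes E :: "nat \<Rightarrow> nat"
  assumes J: "finite J" "0 \<notin> J"
  shows "Poly_Mapping.lookup (\<Prod>j\<in>J. (Var 0 - Var j) ^ (E j) :: 'a::comm_ring_1 mpoly) \<nu> =
   (if Poly_Mapping.keys \<nu> \<subseteq> insert 0 J \<and> (\<forall>j\<in>J. Poly_Mapping.lookup \<nu> j \<le> E j) \<and>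
       Poly_Mapping.lookup \<nu> 0 = (\<Sum>j\<in>J. E j - Poly_Mapping.lookup \<nu> j)
    then \<Prod>j\<in>J. (-1) ^ (Poly_Mapping.lookup \<nu> j) * of_nat (E j choose Poly_Mapping.lookup \<nu> j) else 0)"
proof -
  define mu where "mu = (\<lambda>j a. Poly_Mapping.single 0 (E j - a) + Poly_Mapping.single j (a::nat))"
  define c where "c = (\<lambda>j a. (-1::'a)^a * of_nat (E j choose a))"
  define cond where "cond = (Poly_Mapping.keys \<nu> \<subseteq> insert 0 J \<and> (\<forall>j\<in>J. Poly_Mapping.lookup \<nu> j \<le> E j) \<and>
       Poly_Mapping.lookup \<nu> 0 = (\<Sum>j\<in>J. E j - Poly_Mapping.lookup \<nu> j))"
  define g0 where "g0 = restrict (\<lambda>j. Poly_Mapping.lookup \<nu> j) J"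
  have "(\<Prod>j\<in>J. (Var 0 - Var j) ^ (E j) :: 'a mpoly) =
     (\<Prod>j\<in>J. \<Sum>a\<in>{..E j}. Poly_Mapping.single (mu j a) (c j a))"
    by (rule prod.cong[OF refl]) (simp add: binom_expand mu_def c_def)
  also have "\<dots> = (\<Sum>g\<in>PiE J (\<lambda>j. {..E j}). \<Prod>j\<in>J. Poly_Mapping.single (mu j (g j)) (c j (g j)))"
    by (rule prod_sum_PiE) (use J in auto)
  also have "\<dots> = (\<Sum>g\<in>PiE J (\<lambda>j. {..E j}). Poly_Mapping.single (\<Sum>j\<in>J. mu j (g j)) (\<Prod>j\<in>J. c j (g j)))"
    by (rule sum.cong[OF refl]) (rule prod_single[OF J(1)])
  finally have P: "(\<Prod>j\<in>J. (Var 0 - Var j) ^ (E j) :: 'a mpoly) = \<dots>" .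
  have key: "(\<Sum>j\<in>J. mu j (g j)) = \<nu> \<longleftrightarrow> g = g0 \<and> cond" if g: "g \<in> PiE J (\<lambda>j. {..E j})" for g
  proof -
    have L: "Poly_Mapping.lookup (\<Sum>j\<in>J. mu j (g j)) x =
       (if x = 0 then (\<Sum>j\<in>J. E j - g j) else if x \<in> J then g x else 0)" for x
      unfolding mu_def by (rule lookup_sum_mon[OF J])
    show ?thesis
    proof
      assume eq: "(\<Sum>j\<in>J. mu j (g j)) = \<nu>"
      have lv: "Poly_Mapping.lookup \<nu> x = (if x = 0 then (\<Sum>j\<in>J. E j - g j) else if x \<in> J then g x else 0)" for x
        using L[of x] eq by simp
      have gg: "g = g0"
      proof
        fix x show "g x = g0 x"
          using g lv[of x] J(2) unfolding g0_def by (auto simp: PiE_def extensional_def)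
      qed
      have "cond"
        unfolding cond_def
      proof (intro conjI)
        show "Poly_Mapping.keys \<nu> \<subseteq> insert 0 J"
          using lv by (auto simp: in_keys_iff split: if_splits)
        show "\<forall>j\<in>J. Poly_Mapping.lookup \<nu> j \<le> E j"
          using lv g J(2) by (auto simp: PiE_def Pi_def)
        show "Poly_Mapping.lookup \<nu> 0 = (\<Sum>j\<in>J. E j - Poly_Mapping.lookup \<nu> j)"
          using lv[of 0] J(2) by (auto intro!: sum.cong simp: lv)
      qed
      then show "g = g0 \<and> cond" using gg by simp
    next
      assume h: "g = g0 \<and> cond"
      show "(\<Sum>j\<in>J. mu j (g j)) = \<nu>"
      proof (rule poly_mapping_eqI)
        fix x
        show "Poly_Mapping.lookup (\<Sum>j\<in>J. mu j (g j)) x = Poly_Mapping.lookup \<nu> x"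
        proof (cases "x = 0")
          case True
          then show ?thesis using h J(2) unfolding L cond_def g0_def by (auto intro!: sum.cong)
        next
          case False
          then show ?thesis using h J(2) unfolding L cond_def g0_def by (auto simp: in_keys_iff)
        qed
      qed
    qed
  qed
  have g0P: "cond \<Longrightarrow> g0 \<in> PiE J (\<lambda>j. {..E j})"
    unfolding cond_def g0_def by auto
  have "Poly_Mapping.lookup (\<Prod>j\<in>J. (Var 0 - Var j) ^ (E j) :: 'a mpoly) \<nu> =
     (\<Sum>g\<in>PiE J (\<lambda>j. {..E j}). if g = g0 then (if cond then (\<Prod>j\<in>J. c j (g j)) else 0) else 0)"
    unfolding P lookup_sum
    by (rule sum.cong[OF refl]) (auto simp: lookup_single when_def key)
  also have "\<dots> = (if cond then (\<Prod>j\<in>J. c j (g0 j)) else 0)"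
    proof (cases cond)
    case True
    have fin: "finite (PiE J (\<lambda>j. {..E j}))" using J(1) by (simp add: finite_PiE)
    show ?thesis using True g0P[OF True] by (simp add: sum.delta[OF fin])
  next
    case False
    then have cF: "cond = False" by blast
    show ?thesis by (simp only: cF if_False if_cancel sum.neutral_const)
  qed
  also have "\<dots> = (if cond then \<Prod>j\<in>J. (-1) ^ (Poly_Mapping.lookup \<nu> j) * of_nat (E j choose Poly_Mapping.lookup \<nu> j) else 0)"
    unfolding c_def g0_def by (auto intro!: prod.cong)
  finally show ?thesis unfolding cond_def .
qed

lemma card_prime: "prime (CARD('p::prime_card))"
  by (rule prime_card)

lemma ofnat_nz: assumes "0 < x" "x < CARD('p::prime_card)" shows "(of_nat x :: 'p mod_ring) \<noteq> 0"
proof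
  assume "(of_nat x :: 'p mod_ring) = 0"
  then have "CARD('p) dvd x" by (rule of_nat_0_mod_ring_dvd)
  with assms show False by (auto dest: dvd_imp_le)
qed

lemma fact_nz: assumes "x < CARD('p::prime_card)" shows "(of_nat (fact x) :: 'p mod_ring) \<noteq> 0"
proof
  assume "(of_nat (fact x) :: 'p mod_ring) = 0"
  then have "CARD('p) dvd fact x" by (rule of_nat_0_mod_ring_dvd)
  with assms card_prime[where 'p='p] show False by (simp add: prime_dvd_fact_iff)
qed

lemma card_zero: "(of_nat CARD('p::prime_card) :: 'p mod_ring) = 0"
  by simp

lemma Mres_bounds:
  assumes "prime q" "q < CARD('p::prime_card)" "0 < m" "m < q"
  shows "0 < Mres TYPE('p) q m \<and> Mres TYPE('p) q m < CARD('p)"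
proof -
  define c where "c = - (of_nat m :: 'p mod_ring) / of_nat q"
  have q0: "0 < q" using assms(1) prime_gt_0_nat by blast
  have "(of_nat m :: 'p mod_ring) \<noteq> 0" using assms by (intro ofnat_nz) auto
  moreover have "(of_nat q :: 'p mod_ring) \<noteq> 0" using assms q0 by (intro ofnat_nz) auto
  ultimately have c0: "c \<noteq> 0" unfolding c_def by simp
  obtain k where k: "k < CARD('p)" "c = of_nat k" using surj_of_nat_mod_ring by blast
  have k0: "0 < k" using k c0 by (cases k) auto
  have P: "0 < k \<and> (of_nat k :: 'p mod_ring) = - of_nat m / of_nat q" using k0 k c_def by simp
  have "Mres TYPE('p) q m \<le> k" unfolding Mres_def by (rule Least_le) (rule P)
  moreover have "0 < Mres TYPE('p) q m" unfolding Mres_def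
    by (rule conjunct1[OF LeastI[of _ k]]) (rule P)
  ultimately show ?thesis using k by simp
qed

lemma wilson_F: "(of_nat (fact (CARD('p::prime_card) - 1)) :: 'p mod_ring) = -1"
proof -
  let ?p = "CARD('p)"
  have "[fact (?p - 1) = - 1] (mod int ?p)" by (rule wilson_theorem[OF card_prime])
  then have "(fact (?p - 1) :: int) mod int ?p = (-1) mod int ?p" by (simp add: cong_def)
  then have "(of_int ((fact (?p - 1) :: int) mod int CHAR('p mod_ring)) :: 'p mod_ring) = of_int ((-1) mod int CHAR('p mod_ring))"
    by simp
  then have "(of_int (fact (?p - 1) :: int) :: 'p mod_ring) = of_int (-1)"
    by (simp only: of_int_mod_CHAR)
  note w = this
  have fi: "(fact (?p - 1) :: int) = int (fact (?p - 1))" by (simp add: of_nat_fact)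
  have "(of_nat (fact (?p - 1)) :: 'p mod_ring) = of_int (int (fact (?p - 1)))" by (simp only: of_int_of_nat_eq)
  also have "\<dots> = of_int (fact (?p - 1) :: int)" by (simp only: fi)
  also have "\<dots> = of_int (-1)" by (rule w)
  also have "\<dots> = -1" by simp
  finally show ?thesis .
qed

lemma wilson_gen:
  assumes "1 \<le> b" "b < CARD('p::prime_card)"
  shows "(of_nat (fact (CARD('p) - b)) :: 'p mod_ring) * of_nat (fact (b - 1)) = (-1) ^ b"
  using assms
proof (induction b rule: dec_induct)
  case base
  then show ?case using wilson_F[where 'p='p] by simp
next
  case (step b)
  let ?p = "CARD('p)"
  have IH: "(of_nat (fact (?p - b)) :: 'p mod_ring) * of_nat (fact (b - 1)) = (-1) ^ b" using step by simp
  have e1: "?p - b = Suc (?p - Suc b)" using step by simp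
  have "(of_nat (?p - b) :: 'p mod_ring) = of_nat ?p - of_nat b" using step by (simp add: of_nat_diff)
  then have e2: "(of_nat (?p - b) :: 'p mod_ring) = - of_nat b" by simp
  have e3: "(of_nat (fact (?p - b)) :: 'p mod_ring) = of_nat (?p - b) * of_nat (fact (?p - Suc b))"
  proof -
    have "fact (?p - b) = (?p - b) * fact (?p - Suc b)" by (simp only: e1 fact_Suc of_nat_id)
    then show ?thesis by (simp del: of_nat_fact)
  qed
  have e4n: "fact b = b * fact (b - 1)"
    using step(1) fact_reduce[of b, where 'a=nat] by simp
  have "(of_nat (fact (?p - Suc b)) :: 'p mod_ring) * of_nat (fact (Suc b - 1)) = of_nat (fact (?p - Suc b)) * (of_nat b * of_nat (fact (b - 1)))"
    using e4n by (simp del: of_nat_fact)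
  also have "\<dots> = - ((of_nat (fact (?p - b)) :: 'p mod_ring) * of_nat (fact (b - 1)))"
    using e3 e2 by (simp add: algebra_simps)
  also have "\<dots> = (-1) ^ Suc b" using IH by simp
  finally show ?case .
qed


lemma neg1_cases: "(-1::'a::ring_1) ^ n = 1 \<or> (-1::'a) ^ n = -1"
  by (cases "even n") simp_all

lemma alg:
  fixes Mi s T :: nat
  assumes sM: "s < Mi" and Mp: "Mi < CARD('p::prime_card)" and podd: "odd CARD('p)"
  defines "R \<equiv> GammaF (Mi+1) * GammaF (CARD('p) - (Mi - s) + 1) / GammaF (s+1) :: 'p mod_ring"
  shows "(-1)^s * (of_nat (Mi - 1 choose s) :: 'p mod_ring) = (-1)^Mi * R * (0 - 1/of_nat Mi)"
    and "(of_nat T :: 'p mod_ring) = - of_nat (Mi - s) \<Longrightarrow>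
         (-1)^s * (of_nat (Mi choose s) :: 'p mod_ring) = (-1)^Mi * R * (1/of_nat T - 0)"
proof -
  let ?p = "CARD('p)"
  define b where "b = Mi - s"
  have b1: "1 \<le> b" "b < ?p" using sM Mp unfolding b_def by auto
  define A where "A = (of_nat (fact s) :: 'p mod_ring)"
  define B where "B = (of_nat (fact (b - 1)) :: 'p mod_ring)"
  define C where "C = (of_nat (fact (?p - b)) :: 'p mod_ring)"
  define F1 where "F1 = (of_nat (fact (Mi - 1)) :: 'p mod_ring)"
  define m where "m = (of_nat Mi :: 'p mod_ring)"
  define bb where "bb = (of_nat b :: 'p mod_ring)"
  define X1 where "X1 = (of_nat (Mi - 1 choose s) :: 'p mod_ring)"
  define X2 where "X2 = (of_nat (Mi choose s) :: 'p mod_ring)"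
  define u where "u = ((-1) ^ s :: 'p mod_ring)"
  define w where "w = ((-1) ^ b :: 'p mod_ring)"
  have A0: "A \<noteq> 0" unfolding A_def using sM Mp by (intro fact_nz) simp
  have B0: "B \<noteq> 0" unfolding B_def using b1 by (intro fact_nz) simp
  have m0: "m \<noteq> 0" unfolding m_def using sM Mp by (intro ofnat_nz) auto
  have bb0: "bb \<noteq> 0" unfolding bb_def using b1 by (intro ofnat_nz) auto
  have W: "C * B = w" unfolding C_def B_def w_def using b1 by (rule wilson_gen)
  have CB: "C = w / B" using W B0 by (simp add: field_simps)
  have Mi_eq: "Mi = s + b" using sM unfolding b_def by simp
  have fM: "(of_nat (fact Mi) :: 'p mod_ring) = m * F1"
  proof -
    have "fact Mi = Mi * fact (Mi - 1)" using sM fact_reduce[of Mi, where 'a=nat] by simp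
    then show ?thesis unfolding m_def F1_def by (simp del: of_nat_fact)
  qed
  have fb: "(of_nat (fact b) :: 'p mod_ring) = bb * B"
  proof -
    have "fact b = b * fact (b - 1)" using b1 fact_reduce[of b, where 'a=nat] by simp
    then show ?thesis unfolding bb_def B_def by (simp del: of_nat_fact)
  qed
  have bin1: "X1 * A * B = F1"
  proof -
    have "fact s * fact (Mi - 1 - s) * (Mi - 1 choose s) = fact (Mi - 1)"
      using sM by (intro binomial_fact_lemma) simp
    moreover have "Mi - 1 - s = b - 1" unfolding b_def by simp
    ultimately have "fact s * fact (b - 1) * (Mi - 1 choose s) = fact (Mi - 1)" by simp
    then have "(of_nat (fact s * fact (b - 1) * (Mi - 1 choose s)) :: 'p mod_ring) = of_nat (fact (Mi - 1))"
      by (simp only:)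
    then show ?thesis unfolding X1_def A_def B_def F1_def by (simp del: of_nat_fact add: ac_simps)
  qed
  have bin2: "X2 * A * (bb * B) = m * F1"
  proof -
    have "fact s * fact (Mi - s) * (Mi choose s) = fact Mi"
      using sM by (intro binomial_fact_lemma) simp
    then have "fact s * fact b * (Mi choose s) = fact Mi" unfolding b_def .
    then have "(of_nat (fact s * fact b * (Mi choose s)) :: 'p mod_ring) = of_nat (fact Mi)"
      by (simp only:)
    then show ?thesis using fM fb unfolding X2_def A_def by (simp del: of_nat_fact add: ac_simps)
  qed
  have sg: "(-1::'p mod_ring) ^ (?p - b) = - w"
  proof -
    have "(-1::'p mod_ring) ^ (?p - b) * (-1) ^ b = (-1) ^ ?p"
      using b1 by (simp add: power_add[symmetric])
    also have "\<dots> = -1" using podd by simp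
    finally have "(-1::'p mod_ring) ^ (?p - b) * w = -1" unfolding w_def .
    then show ?thesis using neg1_cases[of b, where 'a="'p mod_ring"] unfolding w_def[symmetric]
      by (auto simp: algebra_simps)
  qed
  have sM': "(-1::'p mod_ring) ^ Mi = u * w" unfolding Mi_eq u_def w_def by (simp add: power_add)
  have G1: "(GammaF (Mi + 1) :: 'p mod_ring) = u * w * (m * F1)"
    unfolding GammaF_def using fM sM' by simp
  have G2: "(GammaF (?p - (Mi - s) + 1) :: 'p mod_ring) = - w * C"
    unfolding GammaF_def b_def[symmetric] using sg C_def by simp
  have G3: "(GammaF (s + 1) :: 'p mod_ring) = u * A"
    unfolding GammaF_def u_def A_def by simp
  have Rv: "R = u * w * (m * F1) * (- w * C) / (u * A)"
    unfolding R_def G1 G2 G3 ..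
  have uc: "u = 1 \<or> u = -1" unfolding u_def by (rule neg1_cases)
  have wc: "w = 1 \<or> w = -1" unfolding w_def by (rule neg1_cases)
  show "(-1)^s * (of_nat (Mi - 1 choose s) :: 'p mod_ring) = (-1)^Mi * R * (0 - 1/of_nat Mi)"
    unfolding sM' Rv u_def[symmetric] X1_def[symmetric] m_def[symmetric]
    using uc wc A0 B0 m0 unfolding CB bin1[symmetric]
    by (elim disjE) (simp_all add: field_simps)
  assume T: "(of_nat T :: 'p mod_ring) = - of_nat (Mi - s)"
  show "(-1)^s * (of_nat (Mi choose s) :: 'p mod_ring) = (-1)^Mi * R * (1/of_nat T - 0)"
  proof -
    have F1v: "F1 = X2 * A * bb * B / m" using bin2 m0 by (simp add: field_simps)
    show ?thesis
      unfolding sM' Rv u_def[symmetric] X2_def[symmetric] T b_def[symmetric] bb_def[symmetric]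
      using uc wc A0 B0 m0 bb0 unfolding CB F1v
      by (elim disjE) (simp_all add: field_simps)
  qed
qed

lemma Phi_prod:
  assumes k: "k \<in> {1..n}"
  shows "(Phi_div n M k :: 'a::comm_ring_1 mpoly) = (\<Prod>j\<in>{1..n}. (Var 0 - Var j) ^ ((M(k := M k - 1)) j))"
proof -
  have "(\<Prod>j\<in>{1..n}. (Var 0 - Var j) ^ ((M(k := M k - 1)) j) :: 'a mpoly) =
    (Var 0 - Var k) ^ ((M(k := M k - 1)) k) * (\<Prod>j\<in>{1..n} - {k}. (Var 0 - Var j) ^ ((M(k := M k - 1)) j))"
    using k by (intro prod.remove) auto
  also have "\<dots> = (Var 0 - Var k) ^ (M k - 1) * (\<Prod>j\<in>{1..n} - {k}. (Var 0 - Var j) ^ (M j))"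
    by (intro arg_cong2[where f="(*)"] prod.cong) auto
  finally show ?thesis unfolding Phi_div_def by simp
qed

lemma Ivec_formula:
  assumes k: "k \<in> {1..n}" and d: "zmonom n d"
  shows "(Ivec n M p l k d :: 'a::comm_ring_1) =
    (if (\<forall>j\<in>{1..n}. Poly_Mapping.lookup d j \<le> (M(k := M k - 1)) j) \<and>
        l * p - 1 = (\<Sum>j\<in>{1..n}. (M(k := M k - 1)) j - Poly_Mapping.lookup d j)
     then \<Prod>j\<in>{1..n}. (-1) ^ (Poly_Mapping.lookup d j) * of_nat ((M(k := M k - 1)) j choose Poly_Mapping.lookup d j)
     else 0)"
proof -
  define \<nu> where "\<nu> = Poly_Mapping.single 0 (l * p - 1) + d"
  have d0: "Poly_Mapping.lookup d 0 = 0" using d unfolding zmonom_def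
    by (auto simp: in_keys_iff)
  have l0: "Poly_Mapping.lookup \<nu> 0 = l * p - 1" unfolding \<nu>_def by (simp add: lookup_add d0)
  have lj: "Poly_Mapping.lookup \<nu> j = Poly_Mapping.lookup d j" if "j \<noteq> 0" for j
    unfolding \<nu>_def using that by (simp add: lookup_add lookup_single)
  have keys: "Poly_Mapping.keys \<nu> \<subseteq> insert 0 {1..n}"
  proof
    fix x assume "x \<in> Poly_Mapping.keys \<nu>"
    then have "Poly_Mapping.lookup \<nu> x \<noteq> 0" by (simp add: in_keys_iff)
    show "x \<in> insert 0 {1..n}"
    proof (cases "x = 0")
      case False
      then have "x \<in> Poly_Mapping.keys d" using lj[of x] \<open>Poly_Mapping.lookup \<nu> x \<noteq> 0\<close> by (simp add: in_keys_iff)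
      then show ?thesis using d unfolding zmonom_def by blast
    qed simp
  qed
  have "(Ivec n M p l k d :: 'a) = Poly_Mapping.lookup (\<Prod>j\<in>{1..n}. (Var 0 - Var j) ^ ((M(k := M k - 1)) j) :: 'a mpoly) \<nu>"
    unfolding Ivec_def \<nu>_def Phi_prod[OF k] ..
  also have "\<dots> = (if Poly_Mapping.keys \<nu> \<subseteq> insert 0 {1..n} \<and> (\<forall>j\<in>{1..n}. Poly_Mapping.lookup \<nu> j \<le> (M(k := M k - 1)) j) \<and>
       Poly_Mapping.lookup \<nu> 0 = (\<Sum>j\<in>{1..n}. (M(k := M k - 1)) j - Poly_Mapping.lookup \<nu> j)
    then \<Prod>j\<in>{1..n}. (-1) ^ (Poly_Mapping.lookup \<nu> j) * of_nat ((M(k := M k - 1)) j choose Poly_Mapping.lookup \<nu> j) else 0)"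
    by (rule coef_prod) auto
  also have "\<dots> = (if (\<forall>j\<in>{1..n}. Poly_Mapping.lookup d j \<le> (M(k := M k - 1)) j) \<and>
        l * p - 1 = (\<Sum>j\<in>{1..n}. (M(k := M k - 1)) j - Poly_Mapping.lookup d j)
     then \<Prod>j\<in>{1..n}. (-1) ^ (Poly_Mapping.lookup d j) * of_nat ((M(k := M k - 1)) j choose Poly_Mapping.lookup d j)
     else 0)"
  proof -
    have c1: "(\<forall>j\<in>{1..n}. Poly_Mapping.lookup \<nu> j \<le> (M(k := M k - 1)) j) = (\<forall>j\<in>{1..n}. Poly_Mapping.lookup d j \<le> (M(k := M k - 1)) j)"
      using lj by auto
    have c2: "(\<Sum>j\<in>{1..n}. (M(k := M k - 1)) j - Poly_Mapping.lookup \<nu> j) = (\<Sum>j\<in>{1..n}. (M(k := M k - 1)) j - Poly_Mapping.lookup d j)"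
      by (rule sum.cong) (auto simp: lj)
    have c3: "(\<Prod>j\<in>{1..n}. (-1) ^ (Poly_Mapping.lookup \<nu> j) * (of_nat ((M(k := M k - 1)) j choose Poly_Mapping.lookup \<nu> j) :: 'a))
       = (\<Prod>j\<in>{1..n}. (-1) ^ (Poly_Mapping.lookup d j) * of_nat ((M(k := M k - 1)) j choose Poly_Mapping.lookup d j))"
      by (rule prod.cong) (auto simp: lj)
    show ?thesis unfolding c1 c2 c3 l0 using keys by simp
  qed
  finally show ?thesis .
qed

theorem theorem6p1:
  fixes q n l i :: nat and m :: "nat \<Rightarrow> nat"
  defines "p \<equiv> CARD('p::prime_card)"
  defines "M \<equiv> (\<lambda>j. Mres TYPE('p) q (m j))"
  defines "r \<equiv> (\<Sum>j\<in>{1..n}. M j) div p"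
  assumes "prime q" and "p > n" and "n \<ge> 2" and "p > q"
    and "\<forall>j\<in>{1..n}. 0 < m j \<and> m j < q"
    and "1 \<le> l" and "l \<le> r"
    and "0 < i"
    and "0 \<le> (\<Sum>j\<in>{i..n}. int (M j)) - int (l * p)"
    and "(\<Sum>j\<in>{i..n}. int (M j)) - int (l * p) < int (M i)"
  shows "id_leading_term n
     (\<lambda>k d. Ivec n M p l k d :: 'p mod_ring)
     (\<lambda>k. (-1) ^ (\<Sum>j\<in>{1..i}. M j) *
          (GammaF (M i + 1) *
           GammaF (nat ((\<Sum>j\<in>{i+1..n}. int (M j)) - int ((l - 1) * p) + 1)) /
           GammaF (nat ((\<Sum>j\<in>{i..n}. int (M j)) - int (l * p) + 1))) *
          ((if i < k \<and> k \<le> n then 1 / of_nat (\<Sum>j\<in>{i+1..n}. M j) else 0)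
           - (if k = i then 1 / of_nat (M i) else 0)))
     ((\<Sum>j\<in>{1..<i}. Poly_Mapping.single j (M j)) +
      Poly_Mapping.single i (nat ((\<Sum>j\<in>{i..n}. int (M j)) - int (l * p))))"
proof -
  have pprime: "prime p" unfolding p_def by (rule prime_card)
  have Mb: "0 < M j \<and> M j < p" if "j \<in> {1..n}" for j
    unfolding M_def p_def using Mres_bounds[of q "m j", where 'p='p] assms(4,7) that assms(8)
    unfolding p_def by auto
  have podd: "odd p" using pprime assms(5,6) by (intro prime_odd_nat) auto
  have p0: "0 < p" using assms(5) by simp
  have lp1: "1 \<le> l * p" using assms(9) p0 by simp
  have isum: "(\<Sum>j\<in>{a..b}. int (M j)) = int (\<Sum>j\<in>{a..b}. M j)" for a b by simp
  have i_le_n: "i \<le> n"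
  proof (rule ccontr)
    assume "\<not> i \<le> n"
    then have "{i..n} = {}" by auto
    then show False using assms(12) lp1 by (simp only: sum.empty)
  qed
  have i1n: "i \<in> {1..n}" using i_le_n assms(11) by simp
  define s where "s = nat ((\<Sum>j\<in>{i..n}. int (M j)) - int (l * p))"
  have Si: "(\<Sum>j\<in>{i..n}. int (M j)) = int (\<Sum>j\<in>{i..n}. M j)" by (simp only: of_nat_sum)
  have le: "l * p \<le> (\<Sum>j\<in>{i..n}. M j)" using assms(12) unfolding Si by linarith
  have s_int: "int s = int (\<Sum>j\<in>{i..n}. M j) - int (l * p)"
    unfolding s_def Si by (simp only: of_nat_diff[OF le, symmetric] nat_int)
  have s_eq: "s + l * p = (\<Sum>j\<in>{i..n}. M j)" using s_int by linarith
  have s_lt: "s < M i" using assms(13) s_int unfolding Si by linarith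
  define P where "P = (\<Sum>j\<in>{1..<i}. M j)"
  define S where "S = (\<Sum>j\<in>{1..n}. M j)"
  have S_eq: "S = P + s + l * p"
  proof -
    have "{1..n} = {1..<i} \<union> {i..n}" using i1n by auto
    then have "S = P + (\<Sum>j\<in>{i..n}. M j)" unfolding S_def P_def
      by (simp add: sum.union_disjoint ivl_disj_int)
    then show ?thesis using s_eq by simp
  qed
  define D where "D = (\<Sum>j\<in>{1..<i}. Poly_Mapping.single j (M j)) + Poly_Mapping.single i s"
  have lookD: "Poly_Mapping.lookup D x = (if x \<in> {1..<i} then M x else 0) + (if x = i then s else 0)" for x
    unfolding D_def by (simp add: lookup_add lookup_sum lookup_single when_def)
  have zD: "zmonom n D"
    unfolding zmonom_def
  proof
    fix x assume "x \<in> Poly_Mapping.keys D"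
    then have "Poly_Mapping.lookup D x \<noteq> 0" by (simp add: in_keys_iff)
    then show "x \<in> {1..n}" using i1n unfolding lookD by (auto split: if_splits)
  qed
  have D_eq: "((\<Sum>j\<in>{1..<i}. Poly_Mapping.single j (M j)) +
      Poly_Mapping.single i (nat ((\<Sum>j\<in>{i..n}. int (M j)) - int (l * p)))) = D"
    unfolding D_def s_def ..
  define E where "E = (\<lambda>k. M(k := M k - 1))"
  have sumE: "(\<Sum>j\<in>{1..n}. E k j) + 1 = S" if k: "k \<in> {1..n}" for k
  proof -
    have "(\<Sum>j\<in>{1..n}. E k j) = E k k + (\<Sum>j\<in>{1..n} - {k}. E k j)" using k by (intro sum.remove) auto
    also have "(\<Sum>j\<in>{1..n} - {k}. E k j) = (\<Sum>j\<in>{1..n} - {k}. M j)" unfolding E_def by (intro sum.cong) auto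
    finally have a: "(\<Sum>j\<in>{1..n}. E k j) = (M k - 1) + (\<Sum>j\<in>{1..n} - {k}. M j)" unfolding E_def by simp
    have b: "S = M k + (\<Sum>j\<in>{1..n} - {k}. M j)" unfolding S_def using k by (intro sum.remove) auto
    show ?thesis using a b Mb[OF k] by simp
  qed
  have EleM: "E k j \<le> M j" for k j unfolding E_def by simp
  have Ivec_nz: "(\<forall>j\<in>{1..n}. Poly_Mapping.lookup d j \<le> E k j) \<and> (\<Sum>j\<in>{1..n}. Poly_Mapping.lookup d j) + l * p = S"
    if k: "k \<in> {1..n}" and d: "zmonom n d" and nz: "(Ivec n M p l k d :: 'p mod_ring) \<noteq> 0" for k d
  proof -
    have c: "(\<forall>j\<in>{1..n}. Poly_Mapping.lookup d j \<le> E k j) \<and>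
        l * p - 1 = (\<Sum>j\<in>{1..n}. E k j - Poly_Mapping.lookup d j)"
      using nz unfolding Ivec_formula[OF k d] E_def by (auto split: if_splits)
    then have "(\<Sum>j\<in>{1..n}. E k j - Poly_Mapping.lookup d j) = (\<Sum>j\<in>{1..n}. E k j) - (\<Sum>j\<in>{1..n}. Poly_Mapping.lookup d j)"
      by (intro sum_subtractf_nat) auto
    moreover have "(\<Sum>j\<in>{1..n}. Poly_Mapping.lookup d j) \<le> (\<Sum>j\<in>{1..n}. E k j)"
      using c by (intro sum_mono) auto
    ultimately have "(\<Sum>j\<in>{1..n}. Poly_Mapping.lookup d j) + l * p = S"
      using c sumE[OF k] lp1 by linarith
    then show ?thesis using c by blast
  qed
  have sumD: "(\<Sum>j\<in>{1..t}. Poly_Mapping.lookup D j) = P + s" if "i \<le> t" for t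
  proof -
    have "(\<Sum>j\<in>{1..t}. Poly_Mapping.lookup D j) = (\<Sum>j\<in>{1..t}. if j \<in> {1..<i} then M j else 0) + (\<Sum>j\<in>{1..t}. if j = i then s else 0)"
      unfolding lookD by (simp add: sum.distrib)
    also have "(\<Sum>j\<in>{1..t}. if j \<in> {1..<i} then M j else 0) = (\<Sum>j\<in>{1..t} \<inter> {1..<i}. M j)"
      by (simp add: sum.inter_restrict)
    also have "{1..t} \<inter> {1..<i} = {1..<i}" using that by auto
    also have "(\<Sum>j\<in>{1..t}. if j = i then s else 0) = s" using that i1n by simp
    finally show ?thesis unfolding P_def .
  qed
  have partB: "(Ivec n M p l k d :: 'p mod_ring) = 0"
    if k: "k \<in> {1..n}" and d: "zmonom n d" and lx: "lex_less n D d" for k d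
  proof (rule ccontr)
    assume nz: "(Ivec n M p l k d :: 'p mod_ring) \<noteq> 0"
    note c = Ivec_nz[OF k d nz]
    have dsum: "(\<Sum>j\<in>{1..n}. Poly_Mapping.lookup d j) = P + s" using c S_eq by simp
    obtain t where t: "t \<in> {1..n}" "\<forall>j\<in>{1..<t}. Poly_Mapping.lookup D j = Poly_Mapping.lookup d j"
      "Poly_Mapping.lookup D t < Poly_Mapping.lookup d t"
      using lx unfolding lex_less_def by blast
    show False
    proof (cases "t < i")
      case True
      then have "Poly_Mapping.lookup D t = M t" using t(1) unfolding lookD by simp
      moreover have "Poly_Mapping.lookup d t \<le> M t" using c t(1) EleM[of k t] by (meson le_trans)
      ultimately show False using t(3) by simp
    next
      case False
      have "(\<Sum>j\<in>{1..t}. Poly_Mapping.lookup d j) \<le> (\<Sum>j\<in>{1..n}. Poly_Mapping.lookup d j)"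
        using t(1) by (intro sum_mono2) auto
      moreover have "(\<Sum>j\<in>{1..t}. Poly_Mapping.lookup d j) = (\<Sum>j\<in>{1..<t}. Poly_Mapping.lookup d j) + Poly_Mapping.lookup d t"
        using t(1) by (simp add: atLeastLessThanSuc_atLeastAtMost[symmetric] sum.atLeastLessThan_Suc)
      moreover have "(\<Sum>j\<in>{1..t}. Poly_Mapping.lookup D j) = (\<Sum>j\<in>{1..<t}. Poly_Mapping.lookup D j) + Poly_Mapping.lookup D t"
        using t(1) by (simp add: atLeastLessThanSuc_atLeastAtMost[symmetric] sum.atLeastLessThan_Suc)
      moreover have "(\<Sum>j\<in>{1..<t}. Poly_Mapping.lookup D j) = (\<Sum>j\<in>{1..<t}. Poly_Mapping.lookup d j)"
        using t(2) by (intro sum.cong) auto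
      moreover have "(\<Sum>j\<in>{1..t}. Poly_Mapping.lookup D j) = P + s" using False by (intro sumD) simp
      ultimately show False using t(3) dsum by linarith
    qed
  qed
  define T where "T = (\<Sum>j\<in>{i+1..n}. M j)"
  have T_eq: "T + M i = s + l * p"
  proof -
    have "(\<Sum>j\<in>{i..n}. M j) = M i + (\<Sum>j\<in>{Suc i..n}. M j)" using i_le_n by (rule sum.atLeast_Suc_atMost)
    then show ?thesis using s_eq unfolding T_def by simp
  qed
  have Mi: "0 < M i" "M i < p" using Mb[OF i1n] by auto
  have g2: "nat ((\<Sum>j\<in>{i+1..n}. int (M j)) - int ((l - 1) * p) + 1) = p - (M i - s) + 1"
  proof -
    have a: "(\<Sum>j\<in>{i+1..n}. int (M j)) = int T" unfolding T_def by (simp only: of_nat_sum)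
    have b: "int ((l - 1) * p) = int (l * p) - int p" using assms(9) by (simp add: diff_mult_distrib of_nat_diff)
    have "(\<Sum>j\<in>{i+1..n}. int (M j)) - int ((l - 1) * p) + 1 = int (p - (M i - s) + 1)"
      unfolding a b using T_eq s_lt Mi by linarith
    then show ?thesis by simp
  qed
  have g3: "nat ((\<Sum>j\<in>{i..n}. int (M j)) - int (l * p) + 1) = s + 1"
    using s_int unfolding Si by simp
  have sumi: "(\<Sum>j\<in>{1..i}. M j) = P + M i"
    unfolding P_def using i1n by (simp add: atLeastLessThanSuc_atLeastAtMost[symmetric] sum.atLeastLessThan_Suc)
  define R where "R = (GammaF (M i + 1) * GammaF (p - (M i - s) + 1) / GammaF (s + 1) :: 'p mod_ring)"
  define a where "a = (\<lambda>k. (-1) ^ (\<Sum>j\<in>{1..i}. M j) *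
          (GammaF (M i + 1) *
           GammaF (nat ((\<Sum>j\<in>{i+1..n}. int (M j)) - int ((l - 1) * p) + 1)) /
           GammaF (nat ((\<Sum>j\<in>{i..n}. int (M j)) - int (l * p) + 1))) *
          ((if i < k \<and> k \<le> n then 1 / of_nat (\<Sum>j\<in>{i+1..n}. M j) else 0)
           - (if k = i then 1 / of_nat (M i) else 0)) :: 'p mod_ring)"
  have a_eq: "a k = (-1) ^ P * ((-1) ^ M i * R * ((if i < k \<and> k \<le> n then 1 / of_nat T else 0)
           - (if k = i then 1 / of_nat (M i) else 0)))" for k
    unfolding a_def g2 g3 sumi R_def T_def by (simp add: power_add)
  have of_p: "(of_nat p :: 'p mod_ring) = 0" unfolding p_def by simp
  have partA: "(Ivec n M p l k D :: 'p mod_ring) = a k" if k: "k \<in> {1..n}" for k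
  proof (cases "k < i")
    case True
    have "\<not> (Poly_Mapping.lookup D k \<le> (M(k := M k - 1)) k)"
      using True k Mb[OF k] unfolding lookD by (simp add: not_le diff_less)
    then have "(Ivec n M p l k D :: 'p mod_ring) = 0"
      unfolding Ivec_formula[OF k zD] using k by auto
    moreover have "a k = 0" unfolding a_eq using True by simp
    ultimately show ?thesis by simp
  next
    case False
    then have ik: "i \<le> k" by simp
    have Ek: "E k j = M j" if "j \<noteq> k" for j unfolding E_def using that by simp
    have c1: "\<forall>j\<in>{1..n}. Poly_Mapping.lookup D j \<le> E k j"
    proof
      fix j assume j: "j \<in> {1..n}"
      show "Poly_Mapping.lookup D j \<le> E k j"
      proof (cases "j < i")
        case True then show ?thesis using j ik Ek[of j] unfolding lookD by simp
      next
        case False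
        show ?thesis
        proof (cases "j = i")
          case True
          then show ?thesis using False s_lt unfolding lookD E_def by auto
        next
          case False2: False
          then show ?thesis using False unfolding lookD by simp
        qed
      qed
    qed
    have sD: "(\<Sum>j\<in>{1..n}. Poly_Mapping.lookup D j) = P + s" using i_le_n by (rule sumD)
    have c2: "l * p - 1 = (\<Sum>j\<in>{1..n}. E k j - Poly_Mapping.lookup D j)"
    proof -
      have "(\<Sum>j\<in>{1..n}. E k j - Poly_Mapping.lookup D j) = (\<Sum>j\<in>{1..n}. E k j) - (\<Sum>j\<in>{1..n}. Poly_Mapping.lookup D j)"
        using c1 by (intro sum_subtractf_nat) auto
      then show ?thesis using sD sumE[OF k] S_eq by simp
    qed
    define f where "f = (\<lambda>j. (-1) ^ (Poly_Mapping.lookup D j) * (of_nat (E k j choose Poly_Mapping.lookup D j) :: 'p mod_ring))"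
    have Iv: "(Ivec n M p l k D :: 'p mod_ring) = (\<Prod>j\<in>{1..n}. f j)"
      unfolding Ivec_formula[OF k zD] f_def using c1 c2 unfolding E_def by simp
    have "{1..n} = {1..<i} \<union> {i..n}" using i1n by auto
    then have "(\<Prod>j\<in>{1..n}. f j) = (\<Prod>j\<in>{1..<i}. f j) * (\<Prod>j\<in>{i..n}. f j)"
      by (simp add: prod.union_disjoint ivl_disj_int)
    also have "(\<Prod>j\<in>{i..n}. f j) = f i * (\<Prod>j\<in>{Suc i..n}. f j)" using i_le_n by (rule prod.atLeast_Suc_atMost)
    also have "(\<Prod>j\<in>{Suc i..n}. f j) = 1" unfolding f_def lookD by (intro prod.neutral) auto
    also have "(\<Prod>j\<in>{1..<i}. f j) = (\<Prod>j\<in>{1..<i}. (-1) ^ M j)"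
      unfolding f_def lookD using ik by (intro prod.cong) (auto simp: Ek)
    also have "\<dots> = (-1) ^ P" unfolding P_def by (simp add: power_sum)
    also have "f i = (-1) ^ s * of_nat (E k i choose s)" unfolding f_def lookD by simp
    finally have val: "(Ivec n M p l k D :: 'p mod_ring) = (-1) ^ P * ((-1) ^ s * of_nat (E k i choose s))"
      unfolding Iv by simp
    show ?thesis
    proof (cases "k = i")
      case True
      have "E k i = M i - 1" unfolding E_def True by simp
      then show ?thesis unfolding val a_eq using True
          alg(1)[of s "M i", where 'p='p] s_lt Mi podd unfolding R_def p_def by simp
    next
      case False
      have Eki: "E k i = M i" using False by (intro Ek) simp
      have ki: "i < k \<and> k \<le> n" using False ik k by simp
      have "(of_nat T :: 'p mod_ring) + of_nat (M i - s) = of_nat (l * p)"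
      proof -
        have "T + (M i - s) = l * p" using T_eq s_lt by linarith
        then have "(of_nat (T + (M i - s)) :: 'p mod_ring) = of_nat (l * p)" by (simp only:)
        then show ?thesis by (simp only: of_nat_add)
      qed
      then have Tn: "(of_nat T :: 'p mod_ring) = - of_nat (M i - s)"
        using of_p by (simp add: eq_neg_iff_add_eq_0)
      show ?thesis unfolding val a_eq Eki using False ki
          alg(2)[of s "M i" T, where 'p='p] s_lt Mi podd Tn unfolding R_def p_def by simp
    qed
  qed
  have GF: "(GammaF x :: 'p mod_ring) \<noteq> 0" if "x - 1 < p" for x
    unfolding GammaF_def using fact_nz[of "x - 1", where 'p='p] that unfolding p_def by simp
  have R0: "R \<noteq> 0" unfolding R_def using Mi s_lt by (auto intro!: GF)
  have ai: "a i \<noteq> 0"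
    unfolding a_eq using R0 ofnat_nz[of "M i", where 'p='p] Mi unfolding p_def by simp
  show ?thesis
    unfolding id_leading_term_def D_eq a_def[symmetric]
    using zD ai i1n partA partB by blast
qed

end
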